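(* Let $U\subseteq\mathbb{F}^n$ be an open compact set and $f:U\to\mathbb{F}$ a function such that for all $x_0,x_0+x\in U$, $$f(x_0+x)=f(x_0)+f'(x_0)\cdot x+R(x_0,x)(x)\cdot x,$$ where $f'(x_0)\in\mathbb{F}^n$ and $R(x_0,x):\mathbb{F}^n\to\mathbb{F}^n$ is linear, with $$B:=\sup_{x_0,\,x_0+x\in U,\ |y|=1}|R(x_0,x)(y)\cdot y|<\infty,\qquad \delta:=\min_{x_0\in U}|f'(x_0)|>0.$$ Let $\phi\in\mathcal S(U)$ and let $m_0\in\mathbb Z$ be the smallest integer $m$ such that $U$ is a finite disjoint union of balls $x_k+B_{q^{-m}}$ on each of which $\phi$ is constant. Then $$\int_U\chi(\lambda f(x))\phi(x)\,dx=0\qquad\text{for all }\lambda\in\mathbb{F}^\times\text{ with }|\lambda|>\max\{q\delta^{-2}B,\ \delta^{-1}q^{m_0}\}.$$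
   Context: $\mathbb{F}$ is a non-archimedean local field with ring of integers $\mathfrak o_{\mathbb{F}}$, residue field of cardinality $q$, normalized absolute value $|\cdot|$ (so the uniformizer has absolute value $q^{-1}$); on $\mathbb{F}^n$, $|x|=\max_i|x_i|$ and $x\cdot y=\sum_jx_jy_j$; $B_r=\{x\in\mathbb{F}^n:|x|\le r\}$. $\chi$ is a character of $(\mathbb{F},+)$ with kernel $\mathfrak o_{\mathbb{F}}$; $dx$ is a Haar measure on $\mathbb{F}^n$; $\mathcal S(U)$ is the space of locally constant compactly supported functions on $U$. *)

theory Defs
  imports "HOL-Analysis.Analysis"
begin

text \<open>A non-archimedean local field: a field type with a normalized absolute value v,
  discrete value group q^Z, residue field of cardinality q, complete.\<close>
definition nonarch_local_field :: "('a::field \<Rightarrow> real) \<Rightarrow> nat \<Rightarrow> bool" where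
  "nonarch_local_field v q \<longleftrightarrow>
     q \<ge> 2 \<and>
     (\<forall>x. v x \<ge> 0) \<and> (\<forall>x. v x = 0 \<longleftrightarrow> x = 0) \<and>
     (\<forall>x y. v (x * y) = v x * v y) \<and>
     (\<forall>x y. v (x + y) \<le> max (v x) (v y)) \<and>
     v ` (UNIV - {0}) = range (\<lambda>k::int. real q powi k) \<and>
     (\<exists>S. finite S \<and> card S = q \<and> S \<subseteq> {x. v x \<le> 1} \<and>
          (\<forall>x. v x \<le> 1 \<longrightarrow> (\<exists>!s. s \<in> S \<and> v (x - s) < 1))) \<and>
     (\<forall>X::nat \<Rightarrow> 'a. (\<forall>e>0. \<exists>N. \<forall>m\<ge>N. \<forall>k\<ge>N. v (X m - X k) < e) \<longrightarrow>
          (\<exists>L. \<forall>e>0. \<exists>N. \<forall>m\<ge>N. v (X m - L) < e))"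

definition vnorm :: "('a \<Rightarrow> real) \<Rightarrow> 'a ^ 'n \<Rightarrow> real" where
  "vnorm v x = Max (range (\<lambda>i. v (x $ i)))"

definition vdot :: "'a::comm_semiring_0 ^ 'n \<Rightarrow> 'a ^ 'n \<Rightarrow> 'a" where
  "vdot x y = (\<Sum>i\<in>UNIV. x $ i * y $ i)"

definition Fball :: "('a::ab_group_add \<Rightarrow> real) \<Rightarrow> 'a ^ 'n \<Rightarrow> real \<Rightarrow> ('a ^ 'n) set" where
  "Fball v c r = {y. vnorm v (y - c) \<le> r}"

definition Fopen :: "('a::ab_group_add \<Rightarrow> real) \<Rightarrow> ('a ^ 'n) set \<Rightarrow> bool" where
  "Fopen v A \<longleftrightarrow> (\<forall>x\<in>A. \<exists>r>0. {y. vnorm v (y - x) < r} \<subseteq> A)"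

definition Fcompact :: "('a::ab_group_add \<Rightarrow> real) \<Rightarrow> ('a ^ 'n) set \<Rightarrow> bool" where
  "Fcompact v K \<longleftrightarrow> (\<forall>C. (\<forall>A\<in>C. Fopen v A) \<and> K \<subseteq> \<Union>C \<longrightarrow>
       (\<exists>C'\<subseteq>C. finite C' \<and> K \<subseteq> \<Union>C'))"

definition haar_measure :: "('a::ab_group_add \<Rightarrow> real) \<Rightarrow> ('a ^ 'n) measure \<Rightarrow> bool" where
  "haar_measure v \<mu> \<longleftrightarrow>
     space \<mu> = UNIV \<and> sets \<mu> = sigma_sets UNIV {A. Fopen v A} \<and>
     (\<forall>A\<in>sets \<mu>. \<forall>c. emeasure \<mu> ((\<lambda>x. c + x) ` A) = emeasure \<mu> A) \<and>
     0 < emeasure \<mu> (Fball v 0 1) \<and> emeasure \<mu> (Fball v 0 1) < \<infinity>"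

definition char_kernel_O :: "('a::field \<Rightarrow> real) \<Rightarrow> ('a \<Rightarrow> complex) \<Rightarrow> bool" where
  "char_kernel_O v ch \<longleftrightarrow> (\<forall>x y. ch (x + y) = ch x * ch y) \<and> (\<forall>x. cmod (ch x) = 1) \<and>
     {x. ch x = 1} = {x. v x \<le> 1}"

definition schwartz_on :: "('a::ab_group_add \<Rightarrow> real) \<Rightarrow> ('a ^ 'n) set \<Rightarrow> ('a ^ 'n \<Rightarrow> complex) \<Rightarrow> bool" where
  "schwartz_on v U \<phi> \<longleftrightarrow>
     (\<forall>x\<in>U. \<exists>r>0. \<forall>y. vnorm v (y - x) < r \<longrightarrow> \<phi> y = \<phi> x) \<and>
     (\<exists>K. Fcompact v K \<and> K \<subseteq> U \<and> (\<forall>x\<in>U - K. \<phi> x = 0))"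

definition ball_decomp :: "('a::ab_group_add \<Rightarrow> real) \<Rightarrow> nat \<Rightarrow> ('a ^ 'n) set \<Rightarrow> ('a ^ 'n \<Rightarrow> complex) \<Rightarrow> int \<Rightarrow> bool" where
  "ball_decomp v q U \<phi> m \<longleftrightarrow>
     (\<exists>X. finite X \<and> U = (\<Union>x\<in>X. Fball v x (real q powi (-m))) \<and>
        (\<forall>x\<in>X. \<forall>y\<in>X. x \<noteq> y \<longrightarrow> Fball v x (real q powi (-m)) \<inter> Fball v y (real q powi (-m)) = {}) \<and>
        (\<forall>x\<in>X. \<forall>y\<in>Fball v x (real q powi (-m)). \<phi> y = \<phi> x))"

end

theory Submission imports Defs begin

lemma nlf_basic:
  assumes F: "nonarch_local_field v q"
  shows "v 0 = 0" "v (1::'a::field) = 1" "\<And>a. v (-a) = v a" "\<And>a b. v (a*b) = v a * v b"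
    "\<And>a. v (inverse a) = inverse (v a)" "\<And>a b. v (a + b) \<le> max (v a) (v b)"
    "\<And>a. v a \<ge> 0" "\<And>a. v a = 0 \<longleftrightarrow> a = 0" "real q \<ge> 2"
proof -
  have m: "\<And>a b. v (a*b) = v a * v b" and z: "\<And>a. v a = 0 \<longleftrightarrow> a = 0"
    and u: "\<And>a b. v (a + b) \<le> max (v a) (v b)" and p: "\<And>a. v a \<ge> 0"
    using F unfolding nonarch_local_field_def by auto
  show "real q \<ge> 2" using F unfolding nonarch_local_field_def by auto
  show "v 0 = 0" using z by simp
  have "v 1 * v 1 = v 1" using m[of 1 1] by simp
  moreover have "v 1 \<noteq> 0" using z by simp
  ultimately show v1: "v (1::'a) = 1" by (metis mult_cancel_right2)
  show "\<And>a. v (-a) = v a"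
  proof -
    fix a :: 'a
    have "v (-1) * v (-1) = 1" using m[of "-1" "-1"] v1 by simp
    hence "v (-1) = 1" using p[of "-1"]
      by (metis abs_of_nonneg mult_cancel_right2 power2_eq_square real_sqrt_abs real_sqrt_one)
    thus "v (-a) = v a" using m[of "-1" a] by simp
  qed
  show "\<And>a. v (inverse a) = inverse (v a)"
  proof -
    fix a :: 'a
    show "v (inverse a) = inverse (v a)"
    proof (cases "a = 0")
      case True then show ?thesis using z[of 0] by simp
    next
      case False
      then have "v a * v (inverse a) = 1" using m[of a "inverse a"] v1 by simp
      then show ?thesis by (simp add: inverse_unique)
    qed
  qed
qed (use F in \<open>auto simp: nonarch_local_field_def\<close>)

lemma nlf_value:
  assumes F: "nonarch_local_field v q" and "z \<noteq> 0"
  shows "\<exists>k. v z = real q powi k"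
proof -
  have "v z \<in> v ` (UNIV - {0})" using assms by auto
  also have "\<dots> = range (\<lambda>k::int. real q powi k)" using F unfolding nonarch_local_field_def by auto
  finally show ?thesis by auto
qed

lemma nlf_exists:
  assumes F: "nonarch_local_field v q"
  shows "\<exists>z. z \<noteq> 0 \<and> v z = real q powi k"
proof -
  have "real q powi k \<in> v ` (UNIV - {0})" using F unfolding nonarch_local_field_def by auto
  thus ?thesis by auto
qed

lemma nlf_discrete:
  assumes F: "nonarch_local_field v q" and lt: "v z < real q powi (j+1)"
  shows "v z \<le> real q powi j"
proof (cases "z = 0")
  case True then show ?thesis using nlf_basic(1)[OF F] by simp
next
  case False
  then obtain k where k: "v z = real q powi k" using nlf_value[OF F] by blast
  have q1: "real q > 1" using nlf_basic(9)[OF F] by simp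
  have "k < j + 1"
  proof (rule ccontr)
    assume "\<not> k < j + 1"
    hence "real q powi (j+1) \<le> real q powi k" using q1 by (intro power_int_increasing) auto
    thus False using lt k by simp
  qed
  hence "k \<le> j" by simp
  hence "real q powi k \<le> real q powi j" using q1 by (intro power_int_increasing) auto
  thus ?thesis using k by simp
qed


lemma vnorm_ge: "v (x$i) \<le> vnorm v x"
  unfolding vnorm_def by (rule Max_ge) auto

lemma vnorm_attained: "\<exists>i. vnorm v x = v (x$i)"
proof -
  have "vnorm v x \<in> range (\<lambda>i. v (x$i))" unfolding vnorm_def by (rule Max_in) auto
  thus ?thesis by auto
qed

lemma vnorm_le_iff: "vnorm v x \<le> r \<longleftrightarrow> (\<forall>i. v (x$i) \<le> r)"
  unfolding vnorm_def by (subst Max_le_iff) auto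

lemma vnorm_lt_iff: "vnorm v x < r \<longleftrightarrow> (\<forall>i. v (x$i) < r)"
  unfolding vnorm_def by (subst Max_less_iff) auto

context
  fixes v :: "'a::field \<Rightarrow> real" and q :: nat
  assumes F: "nonarch_local_field v q"
begin

lemma vnorm_nonneg: "vnorm v (x::'a^'n) \<ge> 0"
  using vnorm_ge[of v x] nlf_basic(7)[OF F] by (meson order_trans)

lemma vnorm_add: "vnorm v (x + y :: 'a^'n) \<le> max (vnorm v x) (vnorm v y)"
  unfolding vnorm_le_iff
proof
  fix i
  have "v ((x+y)$i) \<le> max (v (x$i)) (v (y$i))" using nlf_basic(6)[OF F] by simp
  also have "\<dots> \<le> max (vnorm v x) (vnorm v y)" using vnorm_ge[of v x i] vnorm_ge[of v y i] by (rule max.mono)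
  finally show "v ((x+y)$i) \<le> max (vnorm v x) (vnorm v y)" .
qed

lemma vnorm_neg: "vnorm v (- x :: 'a^'n) = vnorm v x"
  unfolding vnorm_def using nlf_basic(3)[OF F] by simp

lemma vnorm_minus_commute: "vnorm v (x - y :: 'a^'n) = vnorm v (y - x)"
  by (metis minus_diff_eq vnorm_neg)

lemma vnorm_smult: "vnorm v (c *s x :: 'a^'n) = v c * vnorm v x"
proof -
  obtain i where i: "vnorm v (c *s x) = v ((c *s x)$i)" using vnorm_attained by blast
  obtain j where j: "vnorm v x = v (x$j)" using vnorm_attained by blast
  have "v ((c *s x)$i) = v c * v (x$i)" using nlf_basic(4)[OF F] by simp
  also have "\<dots> \<le> v c * v (x$j)" using vnorm_ge[of v x i] j nlf_basic(7)[OF F]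
    by (simp add: mult_left_mono)
  finally have 1: "vnorm v (c *s x) \<le> v c * vnorm v x" using i j by simp
  have "v c * v (x$j) = v ((c *s x)$j)" using nlf_basic(4)[OF F] by simp
  also have "\<dots> \<le> vnorm v (c *s x)" by (rule vnorm_ge)
  finally show ?thesis using 1 j by simp
qed

lemma vnorm_zero: "vnorm v (0::'a^'n) = 0"
  unfolding vnorm_def using nlf_basic(1)[OF F] by simp

lemma vnorm_eq0: "vnorm v (x::'a^'n) = 0 \<longleftrightarrow> x = 0"
proof
  assume "vnorm v x = 0"
  hence "\<forall>i. v (x$i) \<le> 0" using vnorm_le_iff[of v x 0] by simp
  hence "\<forall>i. x$i = 0" using nlf_basic(7,8)[OF F] by (meson order_antisym)
  thus "x = 0" by (simp add: vec_eq_iff)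
qed (simp add: vnorm_zero)

lemma Fball_open: "r > 0 \<Longrightarrow> Fopen v (Fball v c r :: ('a^'n) set)"
  unfolding Fopen_def Fball_def
proof (intro ballI exI[of _ r] conjI subsetI)
  fix x y assume "r > 0" "x \<in> {y. vnorm v (y - c) \<le> r}" "y \<in> {y. vnorm v (y - x) < r}"
  hence "vnorm v (y - c) \<le> max (vnorm v (y - x)) (vnorm v (x - c))"
    using vnorm_add[of "y - x" "x - c"] by simp
  thus "y \<in> {y. vnorm v (y - c) \<le> r}" using \<open>x \<in> _\<close> \<open>y \<in> _\<close> by auto
qed auto

lemma Fball_trans: "x \<in> Fball v c r \<Longrightarrow> vnorm v (y :: 'a^'n) \<le> r \<Longrightarrow> x + y \<in> Fball v c r"
  unfolding Fball_def using vnorm_add[of "x - c" y] by (auto simp: algebra_simps)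

lemma Fball_sub: "x \<in> Fball v c R \<Longrightarrow> r \<le> R \<Longrightarrow> Fball v x r \<subseteq> Fball v (c :: 'a^'n) R"
proof
  fix y assume a: "x \<in> Fball v c R" "r \<le> R" "y \<in> Fball v x r"
  have "vnorm v (y - c) \<le> max (vnorm v (y - x)) (vnorm v (x - c))"
    using vnorm_add[of "y - x" "x - c"] by simp
  thus "y \<in> Fball v c R" using a unfolding Fball_def by auto
qed

lemma Fball_eq: "p \<in> Fball v c r \<Longrightarrow> p \<in> Fball v d r \<Longrightarrow> Fball v c r = Fball v (d :: 'a^'n) r"
proof -
  assume a: "p \<in> Fball v c r" "p \<in> Fball v d r"
  have "c \<in> Fball v d r"
  proof -
    have "c = p + (c - p)" by simp
    moreover have "vnorm v (c - p) \<le> r" using a(1) vnorm_minus_commute[of c p] unfolding Fball_def by auto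
    ultimately show ?thesis using Fball_trans[OF a(2)] by metis
  qed
  moreover have "d \<in> Fball v c r"
  proof -
    have "d = p + (d - p)" by simp
    moreover have "vnorm v (d - p) \<le> r" using a(2) vnorm_minus_commute[of d p] unfolding Fball_def by auto
    ultimately show ?thesis using Fball_trans[OF a(1)] by metis
  qed
  ultimately show ?thesis using Fball_sub by blast
qed

end

lemma Fopen_preimage_translate:
  assumes "Fopen v A" shows "Fopen v ((\<lambda>x::'a::ab_group_add^'n. x + y) -` A)"
  unfolding Fopen_def
proof
  fix x assume "x \<in> (\<lambda>x. x + y) -` A"
  then obtain r where r: "r > 0" "{z. vnorm v (z - (x + y)) < r} \<subseteq> A"
    using assms unfolding Fopen_def by auto
  have "{z. vnorm v (z - x) < r} \<subseteq> (\<lambda>x. x + y) -` A"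
  proof
    fix z assume "z \<in> {z. vnorm v (z - x) < r}"
    hence "z + y \<in> {z. vnorm v (z - (x + y)) < r}" by (simp add: algebra_simps)
    thus "z \<in> (\<lambda>x. x + y) -` A" using r by auto
  qed
  thus "\<exists>r>0. {z. vnorm v (z - x) < r} \<subseteq> (\<lambda>x. x + y) -` A" using r by auto
qed

lemma haar_translate_measurable:
  assumes haar: "haar_measure v \<mu>"
  shows "(\<lambda>x::'a::ab_group_add^'n. x + y) \<in> measurable \<mu> \<mu>"
proof (rule measurable_sigma_sets)
  show "sets \<mu> = sigma_sets UNIV {A. Fopen v A}" using haar unfolding haar_measure_def by auto
  show "{A. Fopen v A} \<subseteq> Pow UNIV" by auto
  show "(\<lambda>x. x + y) \<in> space \<mu> \<rightarrow> UNIV" by auto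
  fix A :: "('a^'n) set" assume "A \<in> {A. Fopen v A}"
  hence "Fopen v ((\<lambda>x. x + y) -` A)" by (auto intro: Fopen_preimage_translate)
  hence "(\<lambda>x. x + y) -` A \<in> sigma_sets UNIV {A. Fopen v A}" by (auto intro: sigma_sets.Basic)
  thus "(\<lambda>x. x + y) -` A \<inter> space \<mu> \<in> sets \<mu>" using haar unfolding haar_measure_def by auto
qed

lemma haar_distr_translate:
  assumes haar: "haar_measure v \<mu>"
  shows "distr \<mu> \<mu> (\<lambda>x::'a::ab_group_add^'n. x + y) = \<mu>"
proof (rule measure_eqI)
  show "sets (distr \<mu> \<mu> (\<lambda>x. x + y)) = sets \<mu>" by simp
  fix A assume "A \<in> sets (distr \<mu> \<mu> (\<lambda>x. x + y))"
  hence A: "A \<in> sets \<mu>" by simp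
  have "emeasure (distr \<mu> \<mu> (\<lambda>x. x + y)) A = emeasure \<mu> ((\<lambda>x. x + y) -` A \<inter> space \<mu>)"
    by (rule emeasure_distr[OF haar_translate_measurable[OF haar] A])
  also have "(\<lambda>x. x + y) -` A \<inter> space \<mu> = (\<lambda>x. (-y) + x) ` A"
  proof -
    have sp: "space \<mu> = UNIV" using haar unfolding haar_measure_def by auto
    show ?thesis unfolding sp
      by (auto simp: image_iff algebra_simps)
  qed
  also have "emeasure \<mu> \<dots> = emeasure \<mu> A" using haar A unfolding haar_measure_def by blast
  finally show "emeasure (distr \<mu> \<mu> (\<lambda>x. x + y)) A = emeasure \<mu> A" .
qed

lemma haar_translate_integral:
  fixes h :: "'a::ab_group_add^'n \<Rightarrow> complex"
  assumes haar: "haar_measure v \<mu>" and h: "h \<in> borel_measurable \<mu>"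
  shows "integral\<^sup>L \<mu> (\<lambda>x. h (x + y)) = integral\<^sup>L \<mu> h"
proof -
  have "integral\<^sup>L \<mu> h = integral\<^sup>L (distr \<mu> \<mu> (\<lambda>x. x + y)) h"
    using haar_distr_translate[OF haar] by simp
  also have "\<dots> = integral\<^sup>L \<mu> (\<lambda>x. h (x + y))"
    by (rule integral_distr[OF haar_translate_measurable[OF haar] h])
  finally show ?thesis by simp
qed

lemma haar_char_zero:
  fixes h :: "'a::ab_group_add^'n \<Rightarrow> complex"
  assumes haar: "haar_measure v \<mu>" and h: "integrable \<mu> h"
    and sh: "\<And>x. h (x + y) = \<kappa> * h x" and k: "\<kappa> \<noteq> 1"
  shows "integral\<^sup>L \<mu> h = 0"
proof -
  have "integral\<^sup>L \<mu> h = integral\<^sup>L \<mu> (\<lambda>x. h (x + y))"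
    using haar_translate_integral[OF haar borel_measurable_integrable[OF h]] by simp
  also have "\<dots> = \<kappa> * integral\<^sup>L \<mu> h" by (simp add: sh)
  finally have "(1 - \<kappa>) * integral\<^sup>L \<mu> h = 0" by (simp add: algebra_simps)
  thus ?thesis using k by simp
qed


lemma vdot_add_right: "vdot (a::'a::comm_ring_1^'n) (u + w) = vdot a u + vdot a w"
  unfolding vdot_def by (simp add: distrib_left sum.distrib)

lemma vdot_smult_left: "vdot (c *s u) (w::'a::comm_ring_1^'n) = c * vdot u w"
  unfolding vdot_def by (simp add: sum_distrib_left mult.assoc)

lemma vdot_smult_right: "vdot u (c *s w::'a::comm_ring_1^'n) = c * vdot u w"
  unfolding vdot_def by (simp add: sum_distrib_left algebra_simps)

lemma vdot_zero_right: "vdot u (0::'a::comm_ring_1^'n) = 0"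
  unfolding vdot_def by simp

lemma vdot_single: "vdot (a::'a::comm_ring_1^'n) (\<chi> j. if j = i then t else 0) = a$i * t"
  unfolding vdot_def by (simp add: if_distrib cong: if_cong)

lemma char_add: "char_kernel_O v ch \<Longrightarrow> ch (x + y) = ch x * ch y"
  unfolding char_kernel_O_def by auto

lemma char_one: "char_kernel_O v ch \<Longrightarrow> ch x = 1 \<longleftrightarrow> v x \<le> 1"
  unfolding char_kernel_O_def by (auto simp: set_eq_iff)


theorem mainTheorem18:
  fixes v :: "'a::field \<Rightarrow> real" and q :: nat and ch :: "'a \<Rightarrow> complex"
    and \<mu> :: "('a ^ 'n) measure" and U :: "('a ^ 'n) set"
    and f :: "'a ^ 'n \<Rightarrow> 'a" and f' :: "'a ^ 'n \<Rightarrow> 'a ^ 'n"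
    and R :: "'a ^ 'n \<Rightarrow> 'a ^ 'n \<Rightarrow> 'a ^ 'n \<Rightarrow> 'a ^ 'n"
    and B \<delta> :: real and \<phi> :: "'a ^ 'n \<Rightarrow> complex" and m0 :: int
  assumes F: "nonarch_local_field v q"
    and chi: "char_kernel_O v ch"
    and haar: "haar_measure v \<mu>"
    and U_open: "Fopen v U" and U_compact: "Fcompact v U"
    and taylor: "\<And>x0 x. x0 \<in> U \<Longrightarrow> x0 + x \<in> U \<Longrightarrow>
        f (x0 + x) = f x0 + vdot (f' x0) x + vdot (R x0 x x) x"
    and R_add: "\<And>x0 x y z. x0 \<in> U \<Longrightarrow> x0 + x \<in> U \<Longrightarrow> R x0 x (y + z) = R x0 x y + R x0 x z"
    and R_smult: "\<And>x0 x c y. x0 \<in> U \<Longrightarrow> x0 + x \<in> U \<Longrightarrow> R x0 x (c *s y) = c *s R x0 x y"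
    and B_bdd: "bdd_above {v (vdot (R x0 x y) y) | x0 x y. x0 \<in> U \<and> x0 + x \<in> U \<and> vnorm v y = 1}"
    and B_def: "B = Sup {v (vdot (R x0 x y) y) | x0 x y. x0 \<in> U \<and> x0 + x \<in> U \<and> vnorm v y = 1}"
    and delta_min: "\<exists>x0\<in>U. vnorm v (f' x0) = \<delta>" "\<And>x0. x0 \<in> U \<Longrightarrow> \<delta> \<le> vnorm v (f' x0)"
    and delta_pos: "\<delta> > 0"
    and phi: "schwartz_on v U \<phi>"
    and m0: "ball_decomp v q U \<phi> m0" "\<And>m. ball_decomp v q U \<phi> m \<Longrightarrow> m0 \<le> m"
  shows "\<forall>lam. lam \<noteq> 0 \<longrightarrow> v lam > max (real q * B / \<delta>\<^sup>2) (real q powi m0 / \<delta>) \<longrightarrow>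
           set_lebesgue_integral \<mu> U (\<lambda>x. ch (lam * f x) * \<phi> x) = 0"
proof (intro allI impI)
  fix lam :: 'a
  assume lam0: "lam \<noteq> 0"
  assume hyp: "v lam > max (real q * B / \<delta>\<^sup>2) (real q powi m0 / \<delta>)"
  note vb = nlf_basic[OF F]
  have q1: "real q > 1" using vb(9) by simp
  define vl where "vl = v lam"
  have vl0: "vl > 0" using vb(7)[of lam] vb(8)[of lam] lam0 unfolding vl_def by (auto simp: less_le)
  have hypB: "vl > real q * B / \<delta>\<^sup>2" and hypm: "vl > real q powi m0 / \<delta>"
    using hyp unfolding vl_def by auto
  obtain x00 where x00: "x00 \<in> U" "vnorm v (f' x00) = \<delta>" using delta_min(1) by blast
  obtain i0 where i0: "vnorm v (f' x00) = v (f' x00 $ i0)" using vnorm_attained by blast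
  define d where "d = f' x00 $ i0"
  have vd: "v d = \<delta>" using x00 i0 d_def by simp
  have d0: "d \<noteq> 0" using vd delta_pos vb(1) by auto
  obtain pi where pi: "pi \<noteq> 0" "v pi = real q powi 1" using nlf_exists[OF F] by blast
  have vpi: "v pi = real q" using pi by simp
  define r where "r = real q / (vl * \<delta>)"
  have r0: "r > 0" unfolding r_def using vl0 delta_pos q1 by simp
  have r_le: "r \<le> real q powi (-m0)"
  proof -
    obtain e where e: "e \<noteq> 0" "v e = real q powi m0" using nlf_exists[OF F] by blast
    define P where "P = real q powi m0"
    have P0: "P > 0" unfolding P_def using q1 by simp
    have ve: "v (e * inverse (lam * d)) = P / (vl * \<delta>)"
      using e vb(4,5) vd unfolding vl_def P_def by (simp add: divide_inverse)
    moreover have "P / (vl * \<delta>) < 1"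
      using hypm vl0 delta_pos unfolding P_def by (simp add: field_simps)
    ultimately have "v (e * inverse (lam * d)) < real q powi (-1 + 1)" by simp
    hence "v (e * inverse (lam * d)) \<le> real q powi (-1)" by (rule nlf_discrete[OF F])
    hence "P / (vl * \<delta>) \<le> inverse (real q)" using ve
      by (simp add: power_int_minus)
    hence "P * real q \<le> vl * \<delta>" using q1 vl0 delta_pos by (simp add: field_simps)
    hence "real q / (vl * \<delta>) \<le> inverse P" using P0 vl0 delta_pos by (simp add: field_simps)
    thus ?thesis unfolding r_def P_def by (simp add: power_int_minus)
  qed
  define BS where "BS = {v (vdot (R x0 x y) y) | x0 x y. x0 \<in> U \<and> x0 + x \<in> U \<and> vnorm v y = 1}"
  have BS_le: "\<And>w. w \<in> BS \<Longrightarrow> w \<le> B" unfolding B_def BS_def[symmetric]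
    using B_bdd unfolding BS_def[symmetric] by (rule cSup_upper[rotated])
  have B0: "B \<ge> 0"
  proof -
    define onev where "onev = (\<chi> j::'n. (1::'a))"
    have o1: "vnorm v onev = 1" unfolding vnorm_def onev_def using vb(2) by simp
    have "v (vdot (R x00 0 onev) onev) \<in> BS" unfolding BS_def mem_Collect_eq
      by (rule exI[of _ x00], rule exI[of _ 0], rule exI[of _ onev]) (simp add: o1 x00(1))
    thus ?thesis using BS_le vb(7) by (meson order_trans)
  qed
  obtain X where X: "finite X" "U = (\<Union>x\<in>X. Fball v x (real q powi (-m0)))"
    "\<forall>x\<in>X. \<forall>y\<in>Fball v x (real q powi (-m0)). \<phi> y = \<phi> x"
    using m0(1) unfolding ball_decomp_def by auto
  have ballU: "\<And>c. c \<in> U \<Longrightarrow> Fball v c r \<subseteq> U \<and> (\<forall>z\<in>Fball v c r. \<phi> z = \<phi> c)"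
  proof -
    fix c assume "c \<in> U"
    then obtain xk where xk: "xk \<in> X" "c \<in> Fball v xk (real q powi (-m0))" using X(2) by blast
    have sub: "Fball v c r \<subseteq> Fball v xk (real q powi (-m0))" by (rule Fball_sub[OF F xk(2) r_le])
    show "Fball v c r \<subseteq> U \<and> (\<forall>z\<in>Fball v c r. \<phi> z = \<phi> c)"
      using sub X(2,3) xk by auto
  qed
  define g where "g x = ch (lam * f x) * \<phi> x" for x
  define H where "H x = indicator U x *\<^sub>R g x" for x
  have Fb_sets: "\<And>c. Fball v c r \<in> sets \<mu>"
    using haar Fball_open[OF F r0] unfolding haar_measure_def by (auto intro: sigma_sets.Basic)
  have Rbound: "\<And>c z. c \<in> U \<Longrightarrow> c + z \<in> U \<Longrightarrow> v (vdot (R c z z) z) \<le> B * (vnorm v z)\<^sup>2"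
  proof -
    fix c z assume cz: "c \<in> U" "c + z \<in> U"
    show "v (vdot (R c z z) z) \<le> B * (vnorm v z)\<^sup>2"
    proof (cases "z = 0")
      case True then show ?thesis using vb(1) B0 by (simp add: vdot_zero_right)
    next
      case False
      obtain i where i: "vnorm v z = v (z$i)" using vnorm_attained by blast
      define tz where "tz = z$i"
      have tz0: "tz \<noteq> 0" using False i vnorm_eq0[OF F, of z] vb(8) unfolding tz_def by auto
      define w where "w = inverse tz *s z"
      have "vnorm v w = v (inverse tz) * vnorm v z" unfolding w_def by (rule vnorm_smult[OF F])
      also have "\<dots> = 1" using i tz0 vb(5)[of tz] vb(8)[of tz] unfolding tz_def by simp
      finally have vw: "vnorm v w = 1" .
      have zw: "z = tz *s w" unfolding w_def using tz0 by (simp add: vector_smult_assoc)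
      have "vdot (R c z z) z = tz * tz * vdot (R c z w) w"
        by (subst (2 3) zw) (simp add: R_smult[OF cz] vdot_smult_left vdot_smult_right)
      hence "v (vdot (R c z z) z) = (vnorm v z)\<^sup>2 * v (vdot (R c z w) w)"
        using vb(4) i unfolding tz_def by (simp add: power2_eq_square)
      moreover have "v (vdot (R c z w) w) \<le> B" using BS_le cz vw unfolding BS_def by blast
      ultimately show ?thesis
        by (metis mult.commute mult_left_mono zero_le_power2)
    qed
  qed
  have rem: "\<And>c z. c \<in> U \<Longrightarrow> c + z \<in> U \<Longrightarrow> vnorm v z \<le> r \<Longrightarrow> ch (lam * vdot (R c z z) z) = 1"
  proof -
    fix c z assume cz: "c \<in> U" "c + z \<in> U" "vnorm v z \<le> r"
    have "v (lam * vdot (R c z z) z) = vl * v (vdot (R c z z) z)" using vb(4) vl_def by simp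
    also have "\<dots> \<le> vl * (B * (vnorm v z)\<^sup>2)" using Rbound[OF cz(1,2)] vl0 by simp
    also have "\<dots> \<le> vl * (B * r\<^sup>2)"
      using cz(3) vnorm_nonneg[OF F, of z] vl0 B0 by (simp add: mult_left_mono power_mono)
    also have "\<dots> < real q"
    proof -
      have "real q * B < vl * \<delta>\<^sup>2" using hypB delta_pos by (simp add: field_simps)
      thus ?thesis unfolding r_def using vl0 delta_pos q1
        by (simp add: field_simps power2_eq_square)
    qed
    finally have "v (lam * vdot (R c z z) z) < real q powi (0 + 1)" by simp
    hence "v (lam * vdot (R c z z) z) \<le> real q powi 0" by (rule nlf_discrete[OF F])
    hence "v (lam * vdot (R c z z) z) \<le> 1" by simp
    thus "ch (lam * vdot (R c z z) z) = 1" using char_one[OF chi] by blast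
  qed
  have ball_zero: "\<And>c. c \<in> U \<Longrightarrow> integrable \<mu> H \<Longrightarrow>
      integral\<^sup>L \<mu> (\<lambda>x. indicator (Fball v c r) x *\<^sub>R H x) = 0"
  proof -
    fix c assume cU: "c \<in> U" and Hint: "integrable \<mu> H"
    define S where "S = Fball v c r"
    define a where "a = lam *s f' c"
    have va: "vnorm v a = vl * vnorm v (f' c)" unfolding a_def vl_def by (rule vnorm_smult[OF F])
    have va_ge: "vnorm v a \<ge> vl * \<delta>" using va delta_min(2)[OF cU] vl0 by simp
    obtain i where i: "vnorm v a = v (a$i)" using vnorm_attained by blast
    have ai0: "a$i \<noteq> 0" using i va_ge mult_pos_pos[OF vl0 delta_pos] vb(1) by auto
    define t where "t = pi * inverse (a$i)"
    define y where "y = (\<chi> j::'n. if j = i then t else 0)"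
    have vt: "v t = real q / vnorm v a" unfolding t_def using vb(4,5) vpi i by (simp add: divide_inverse)
    have vy: "vnorm v y \<le> r"
      unfolding vnorm_le_iff
    proof
      fix j
      have "v t \<le> r" unfolding vt r_def using va_ge vl0 delta_pos q1
        by (simp add: frac_le)
      thus "v (y$j) \<le> r" unfolding y_def using vb(1) r0 by auto
    qed
    have ay: "vdot a y = pi" unfolding y_def vdot_single t_def using ai0 by simp
    have kap: "ch pi \<noteq> 1" using char_one[OF chi, of pi] vpi q1 by simp
    have gform: "\<And>x. x \<in> S \<Longrightarrow> g x = ch (lam * f c) * \<phi> c * ch (vdot a (x - c))"
    proof -
      fix x assume xS: "x \<in> S"
      have xU: "x \<in> U" and phx: "\<phi> x = \<phi> c" using ballU[OF cU] xS unfolding S_def by auto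
      have cz: "c + (x - c) \<in> U" using xU by simp
      have nz: "vnorm v (x - c) \<le> r" using xS unfolding S_def Fball_def by simp
      have "f x = f c + vdot (f' c) (x - c) + vdot (R c (x - c) (x - c)) (x - c)"
        using taylor[OF cU cz] by simp
      hence "lam * f x = lam * f c + vdot a (x - c) + lam * vdot (R c (x - c) (x - c)) (x - c)"
        unfolding a_def by (simp add: vdot_smult_left distrib_left)
      hence "ch (lam * f x) = ch (lam * f c) * ch (vdot a (x - c))"
        using char_add[OF chi] rem[OF cU cz nz] by simp
      thus "g x = ch (lam * f c) * \<phi> c * ch (vdot a (x - c))" unfolding g_def phx by simp
    qed
    define hS where "hS x = indicator S x *\<^sub>R H x" for x
    have shift: "\<And>x. hS (x + y) = ch pi * hS x"
    proof -
      fix x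
      show "hS (x + y) = ch pi * hS x"
      proof (cases "x \<in> S")
        case True
        have xyS: "x + y \<in> S" using Fball_trans[OF F True[unfolded S_def] vy] S_def by simp
        have "S \<subseteq> U" using ballU[OF cU] S_def by simp
        hence "hS (x + y) = g (x + y)" "hS x = g x" using True xyS
          unfolding hS_def H_def by (auto simp: indicator_def)
        moreover have "x + y - c = (x - c) + y" by simp
        ultimately show ?thesis using gform[OF True] gform[OF xyS] ay
          by (simp add: vdot_add_right char_add[OF chi])
      next
        case False
        have "x + y \<notin> S"
        proof
          assume "x + y \<in> S"
          hence "(x + y) + (- y) \<in> S"
            using Fball_trans[OF F, of "x+y" c r "-y"] vy vnorm_neg[OF F, of y] S_def by simp
          thus False using False by simp
        qed
        thus ?thesis using False unfolding hS_def by simp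
      qed
    qed
    have "integrable \<mu> hS" unfolding hS_def S_def by (rule integrable_mult_indicator[OF Fb_sets Hint])
    hence "integral\<^sup>L \<mu> hS = 0" by (rule haar_char_zero[where h=hS and y=y and \<kappa>="ch pi", OF haar _ shift kap])
    thus "integral\<^sup>L \<mu> (\<lambda>x. indicator (Fball v c r) x *\<^sub>R H x) = 0"
      unfolding hS_def S_def by simp
  qed
  define Cs where "Cs = {Fball v c r | c. c \<in> U}"
  have cov1: "\<forall>A\<in>Cs. Fopen v A"
  proof
    fix A assume "A \<in> Cs"
    then obtain c where "A = Fball v c r" unfolding Cs_def by blast
    thus "Fopen v A" using Fball_open[OF F r0] by simp
  qed
  have cov2: "U \<subseteq> \<Union>Cs"
  proof
    fix x assume xU: "x \<in> U"
    have "vnorm v (0::'a^'n) = 0" by (rule vnorm_zero[OF F])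
    hence "x \<in> Fball v x r" unfolding Fball_def using r0 by simp
    moreover have "Fball v x r \<in> Cs" unfolding Cs_def using xU by blast
    ultimately show "x \<in> \<Union>Cs" by (rule UnionI[rotated])
  qed
  have "(\<forall>A\<in>Cs. Fopen v A) \<and> U \<subseteq> \<Union>Cs \<longrightarrow> (\<exists>C'\<subseteq>Cs. finite C' \<and> U \<subseteq> \<Union>C')"
    using U_compact unfolding Fcompact_def by (rule spec)
  hence "\<exists>C'\<subseteq>Cs. finite C' \<and> U \<subseteq> \<Union>C'" using cov1 cov2 by (rule mp[OF _ conjI])
  then obtain C' where C': "C' \<subseteq> Cs" "finite C'" "U \<subseteq> \<Union>C'" by (elim exE conjE)
  have ind: "\<And>x. x \<in> U \<Longrightarrow> (\<Sum>S\<in>C'. indicator S x) = (1::real)"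
  proof -
    fix x assume xU: "x \<in> U"
    then obtain S0 where S0: "S0 \<in> C'" "x \<in> S0" using C'(3) by blast
    have others: "\<And>S. S \<in> C' - {S0} \<Longrightarrow> indicator S x = (0::real)"
    proof -
      fix S assume S: "S \<in> C' - {S0}"
      obtain c where c: "S = Fball v c r" using S C'(1) unfolding Cs_def by blast
      obtain c0 where c0: "S0 = Fball v c0 r" using S0 C'(1) unfolding Cs_def by blast
      have "x \<notin> S" using Fball_eq[OF F, of x c r c0] c c0 S S0 by auto
      thus "indicator S x = (0::real)" by simp
    qed
    have "(\<Sum>S\<in>C'. indicator S x) = indicator S0 x + (\<Sum>S\<in>C' - {S0}. indicator S x :: real)"
      using C'(2) S0(1) by (simp add: sum.remove)
    also have "\<dots> = 1" using S0(2) others by simp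
    finally show "(\<Sum>S\<in>C'. indicator S x) = (1::real)" .
  qed
  have Hsum: "\<And>x. H x = (\<Sum>S\<in>C'. indicator S x *\<^sub>R H x)"
  proof -
    fix x
    show "H x = (\<Sum>S\<in>C'. indicator S x *\<^sub>R H x)"
    proof (cases "x \<in> U")
      case True then show ?thesis using ind[OF True] by (simp add: scaleR_sum_left[symmetric])
    next
      case False then show ?thesis unfolding H_def by simp
    qed
  qed
  show "set_lebesgue_integral \<mu> U (\<lambda>x. ch (lam * f x) * \<phi> x) = 0"
  proof (cases "integrable \<mu> H")
    case False
    then show ?thesis unfolding set_lebesgue_integral_def H_def g_def
      by (simp add: not_integrable_integral_eq)
  next
    case True
    have "set_lebesgue_integral \<mu> U (\<lambda>x. ch (lam * f x) * \<phi> x) = integral\<^sup>L \<mu> H"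
      unfolding set_lebesgue_integral_def H_def g_def by simp
    also have "\<dots> = integral\<^sup>L \<mu> (\<lambda>x. \<Sum>S\<in>C'. indicator S x *\<^sub>R H x)"
      by (rule arg_cong[where f="integral\<^sup>L \<mu>"], rule ext, rule Hsum)
    also have "\<dots> = (\<Sum>S\<in>C'. integral\<^sup>L \<mu> (\<lambda>x. indicator S x *\<^sub>R H x))"
    proof (rule Bochner_Integration.integral_sum)
      fix S assume "S \<in> C'"
      then obtain c where "S = Fball v c r" using C'(1) unfolding Cs_def by blast
      thus "integrable \<mu> (\<lambda>x. indicator S x *\<^sub>R H x)"
        using integrable_mult_indicator[OF Fb_sets True] by simp
    qed
    also have "\<dots> = 0"
    proof (rule sum.neutral, rule ballI)
      fix S assume "S \<in> C'"
      then obtain c where "S = Fball v c r" "c \<in> U" using C'(1) unfolding Cs_def by blast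
      thus "integral\<^sup>L \<mu> (\<lambda>x. indicator S x *\<^sub>R H x) = 0" using ball_zero True by simp
    qed
    finally show ?thesis .
  qed
qed

end
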